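(* There exists a subclass $\mathbf{X}$ of the class $\mathbf{M}$ of all metric spaces such that $\mathbf{P}_{\mathbf{X}}=\mathbf{SI}$.
   Context: All metric spaces are assumed to have nonempty underlying sets. $\mathbf{F}$ is the set of all functions $f:[0,\infty)\to[0,\infty)$. $f\in\mathbf{F}$ is amenable if $f^{-1}(0)=\{0\}$; increasing if $x\le y$ implies $f(x)\le f(y)$; subadditive if $f(x+y)\le f(x)+f(y)$ for all $x,y\ge0$. $\mathbf{SI}$ is the set of all amenable, increasing, subadditive $f\in\mathbf{F}$. For a class $\mathbf{X}$ of metric spaces, $\mathbf{P}_{\mathbf{X}}$ denotes the set of all $f\in\mathbf{F}$ such that for every metric space $(X,d)$, if $(X,d)\in\mathbf{X}$ then $(X,f\circ d)\in\mathbf{X}$ (where $f\circ d(x,y)=f(d(x,y))$; membership requires $f\circ d$ to be a metric). *)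

theory Defs
  imports Complex_Main
begin

text \<open>Functions [0,\<infinity>) \<rightarrow> [0,\<infinity>) are represented as real \<Rightarrow> real; values
  at negative arguments are irrelevant (all conditions only look at x \<ge> 0).\<close>

definition FF :: "(real \<Rightarrow> real) set" where
  "FF = {f. \<forall>x\<ge>0. f x \<ge> 0}"

definition amenable :: "(real \<Rightarrow> real) \<Rightarrow> bool" where
  "amenable f \<longleftrightarrow> (\<forall>x\<ge>0. f x = 0 \<longleftrightarrow> x = 0)"

definition increasing_F :: "(real \<Rightarrow> real) \<Rightarrow> bool" where
  "increasing_F f \<longleftrightarrow> (\<forall>x y. 0 \<le> x \<longrightarrow> x \<le> y \<longrightarrow> f x \<le> f y)"

definition subadditive_F :: "(real \<Rightarrow> real) \<Rightarrow> bool" where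
  "subadditive_F f \<longleftrightarrow> (\<forall>x\<ge>0. \<forall>y\<ge>0. f (x + y) \<le> f x + f y)"

definition SI :: "(real \<Rightarrow> real) set" where
  "SI = {f \<in> FF. amenable f \<and> increasing_F f \<and> subadditive_F f}"

definition metric_on :: "'a set \<Rightarrow> ('a \<Rightarrow> 'a \<Rightarrow> real) \<Rightarrow> bool" where
  "metric_on A d \<longleftrightarrow>
     (\<forall>x\<in>A. \<forall>y\<in>A. d x y \<ge> 0 \<and> (d x y = 0 \<longleftrightarrow> x = y) \<and> d x y = d y x) \<and>
     (\<forall>x\<in>A. \<forall>y\<in>A. \<forall>z\<in>A. d x z \<le> d x y + d y z)"

text \<open>Metric spaces with carrier in type 'a. The distance function is normalised
  to be 0 outside A \<times> A, so that a space is a unique pair (A,d).\<close>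
definition MS :: "('a set \<times> ('a \<Rightarrow> 'a \<Rightarrow> real)) set" where
  "MS = {(A, d). A \<noteq> {} \<and> metric_on A d \<and> (\<forall>x y. x \<notin> A \<or> y \<notin> A \<longrightarrow> d x y = 0)}"

definition compose_dist :: "(real \<Rightarrow> real) \<Rightarrow> 'a set \<Rightarrow> ('a \<Rightarrow> 'a \<Rightarrow> real) \<Rightarrow> ('a \<Rightarrow> 'a \<Rightarrow> real)" where
  "compose_dist f A d = (\<lambda>x y. if x \<in> A \<and> y \<in> A then f (d x y) else 0)"

definition PP :: "('a set \<times> ('a \<Rightarrow> 'a \<Rightarrow> real)) set \<Rightarrow> (real \<Rightarrow> real) set" where
  "PP X = {f \<in> FF. \<forall>A d. (A, d) \<in> X \<longrightarrow> (A, compose_dist f A d) \<in> X}"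

end

theory Submission
  imports Defs
begin

definition EE :: "'a \<Rightarrow> 'a \<Rightarrow> 'a \<Rightarrow> real \<Rightarrow> real \<Rightarrow> real \<Rightarrow> 'a \<Rightarrow> 'a \<Rightarrow> real" where
  "EE p q r a b c = (\<lambda>u v. if u \<in> {p,q,r} \<and> v \<in> {p,q,r} then
      (if u = v then 0 else if {u,v} = {p,q} then a else if {u,v} = {q,r} then b else c) else 0)"

lemma EE_metric:
  assumes d: "p \<noteq> q" "q \<noteq> r" "p \<noteq> r"
    and pos: "a > 0" "b > 0" "c > 0" and t: "c \<le> a + b" "a \<le> c" "b \<le> c"
  shows "({p,q,r}, EE p q r a b c) \<in> MS"
  using assms unfolding MS_def metric_on_def EE_def
  by (auto simp: doubleton_eq_iff)

lemma compose_EE: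
  assumes "f 0 = 0"
  shows "compose_dist f {p,q,r} (EE p q r a b c) = EE p q r (f a) (f b) (f c)"
  using assms unfolding compose_dist_def EE_def by (auto simp: fun_eq_iff)

lemma EE_vals:
  assumes d: "p \<noteq> q" "q \<noteq> r" "p \<noteq> r"
  shows "EE p q r a b c p p = 0" "EE p q r a b c p q = a" "EE p q r a b c q r = b"
    "EE p q r a b c p r = c"
  using assms unfolding EE_def by (auto simp: doubleton_eq_iff)

theorem mainTheorem9:
  assumes "infinite (UNIV :: 'a set)"
  shows "\<exists>X :: ('a set \<times> ('a \<Rightarrow> 'a \<Rightarrow> real)) set. X \<subseteq> MS \<and> PP X = SI"
proof -
  obtain S :: "'a set" where "finite S" "card S = 3"
    using infinite_arbitrarily_large[OF assms] by blast
  then have "\<exists>x y z. S = {x, y, z} \<and> x \<noteq> y \<and> y \<noteq> z \<and> x \<noteq> z"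
    using card_3_iff by blast
  then obtain p q r :: 'a where d: "p \<noteq> q" "q \<noteq> r" "p \<noteq> r"
    by (elim exE conjE) simp
  define X :: "('a set \<times> ('a \<Rightarrow> 'a \<Rightarrow> real)) set" where
    "X = {({p,q,r}, EE p q r a b c) | a b c. \<exists>g\<in>SI. \<exists>x>0. \<exists>y>0. a = g x \<and> b = g y \<and> c = g (x+y)}"
  have SIprops: "g x > 0" "g x \<le> g (x+y)" "g y \<le> g (x+y)" "g (x+y) \<le> g x + g y"
    if "g \<in> SI" "x > 0" "y > 0" for g x y
  proof -
    have g: "\<forall>x\<ge>0. g x \<ge> 0" "amenable g" "increasing_F g" "subadditive_F g"
      using that(1) unfolding SI_def FF_def by auto
    show "g x > 0" using g(1,2) that(2) unfolding amenable_def
      by (metis less_eq_real_def less_irrefl)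
    show "g x \<le> g (x+y)" using g(3) that unfolding increasing_F_def by auto
    show "g y \<le> g (x+y)" using g(3) that unfolding increasing_F_def by auto
    show "g (x+y) \<le> g x + g y" using g(4) that unfolding subadditive_F_def by auto
  qed
  have XMS: "X \<subseteq> MS"
  proof
    fix z assume "z \<in> X"
    then obtain g x y where z: "z = ({p,q,r}, EE p q r (g x) (g y) (g (x+y)))"
      and g: "g \<in> SI" "x > 0" "y > 0" unfolding X_def by blast
    show "z \<in> MS" unfolding z
      apply (rule EE_metric[OF d])
      using SIprops[OF g] SIprops[OF g(1) g(3) g(2)] by (simp_all add: add.commute)
  qed
  have "PP X = SI"
  proof
    show "SI \<subseteq> PP X"
    proof
      fix f assume f: "f \<in> SI"
      have f0: "f 0 = 0" using f unfolding SI_def amenable_def by auto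
      have "(A, compose_dist f A dd) \<in> X" if h: "(A, dd) \<in> X" for A dd
      proof -
        obtain g x y where A: "A = {p,q,r}" "dd = EE p q r (g x) (g y) (g (x+y))"
          and g: "g \<in> SI" "x > 0" "y > 0" using h unfolding X_def by blast
        have "f \<circ> g \<in> SI"
        proof -
          have F: "\<forall>x\<ge>0. f x \<ge> 0" "amenable f" "increasing_F f" "subadditive_F f"
            "\<forall>x\<ge>0. g x \<ge> 0" "amenable g" "increasing_F g" "subadditive_F g"
            using f g(1) unfolding SI_def FF_def by auto
          have "subadditive_F (f \<circ> g)" unfolding subadditive_F_def
          proof (intro allI impI)
            fix u v :: real assume uv: "0 \<le> u" "0 \<le> v"
            have "f (g (u+v)) \<le> f (g u + g v)"
              using F uv unfolding increasing_F_def subadditive_F_def by simp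
            also have "\<dots> \<le> f (g u) + f (g v)"
              using F uv unfolding subadditive_F_def by simp
            finally show "(f \<circ> g) (u + v) \<le> (f \<circ> g) u + (f \<circ> g) v" by simp
          qed
          moreover have "increasing_F (f \<circ> g)" using F unfolding increasing_F_def by simp
          moreover have "amenable (f \<circ> g)" using F unfolding amenable_def by simp
          ultimately show ?thesis using F unfolding SI_def FF_def by simp
        qed
        then have "\<exists>g'\<in>SI. \<exists>x'>0. \<exists>y'>0. f (g x) = g' x' \<and> f (g y) = g' y' \<and> f (g (x+y)) = g' (x'+y')"
          using g by (intro bexI[of _ "f \<circ> g"]) auto
        then show ?thesis unfolding A compose_EE[of f, OF f0] X_def by blast
      qed
      then show "f \<in> PP X" using f unfolding PP_def SI_def by auto
    qed
  next
    show "PP X \<subseteq> SI"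
    proof
      fix f assume f: "f \<in> PP X"
      have fF: "f \<in> FF" and fX: "\<And>A dd. (A, dd) \<in> X \<Longrightarrow> (A, compose_dist f A dd) \<in> X"
        using f unfolding PP_def by auto
      have idSI: "(\<lambda>t. t) \<in> SI"
        unfolding SI_def FF_def amenable_def increasing_F_def subadditive_F_def by auto
      have key: "f 0 = 0 \<and> f x > 0 \<and> f x \<le> f (x+y) \<and> f (x+y) \<le> f x + f y"
        if xy: "x > 0" "y > 0" for x y
      proof -
        have "\<exists>g'\<in>SI. \<exists>x'>0. \<exists>y'>0. x = g' x' \<and> y = g' y' \<and> x+y = g' (x'+y')"
          using xy idSI by (intro bexI[of _ "\<lambda>t. t"]) auto
        then have "({p,q,r}, EE p q r x y (x+y)) \<in> X" unfolding X_def by blast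
        from fX[OF this] obtain a b c g x' y' where
          eq: "compose_dist f {p,q,r} (EE p q r x y (x+y)) = EE p q r a b c"
          and g: "g \<in> SI" "x' > 0" "y' > 0" "a = g x'" "b = g y'" "c = g (x'+y')"
          unfolding X_def by blast
        have e: "compose_dist f {p,q,r} (EE p q r x y (x+y)) u v = EE p q r a b c u v" for u v
          using eq by simp
        have "f 0 = 0" using e[of p p] by (simp add: compose_dist_def EE_vals[OF d])
        moreover have "f x = a" using e[of p q] by (simp add: compose_dist_def EE_vals[OF d])
        moreover have "f y = b" using e[of q r] by (simp add: compose_dist_def EE_vals[OF d])
        moreover have "f (x+y) = c" using e[of p r] by (simp add: compose_dist_def EE_vals[OF d])
        ultimately show ?thesis using SIprops[OF g(1-3)] g(4-6) by simp
      qed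
      have fnn: "\<forall>x\<ge>0. f x \<ge> 0" using fF unfolding FF_def by simp
      have f0: "f 0 = 0" using conjunct1[OF key[of 1 1, OF zero_less_one zero_less_one]] .
      have am: "amenable f" unfolding amenable_def
      proof (intro allI impI)
        fix x :: real assume "0 \<le> x"
        show "f x = 0 \<longleftrightarrow> x = 0"
        proof (cases "x = 0")
          case False then have "x > 0" using \<open>0 \<le> x\<close> by simp
          then have "f x > 0" using key[of x 1, OF _ zero_less_one] by blast
          then show ?thesis using False by simp
        qed (simp add: f0)
      qed
      have inc: "increasing_F f" unfolding increasing_F_def
      proof (intro allI impI)
        fix u v :: real assume uv: "0 \<le> u" "u \<le> v"
        show "f u \<le> f v"
        proof (cases "u = 0 \<or> u = v")
          case True
          show ?thesis
          proof (cases "u = 0")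
            case True
            have "0 \<le> f v" using fnn uv by simp
            then show ?thesis using True f0 by simp
          next
            case False then have "u = v" using \<open>u = 0 \<or> u = v\<close> by blast
            then show ?thesis by simp
          qed
        next
          case False
          then have "u > 0" "v - u > 0" using uv by auto
          from key[OF this] have "f u \<le> f (u + (v - u))" by blast
          then show ?thesis by simp
        qed
      qed
      have sub: "subadditive_F f" unfolding subadditive_F_def
      proof (intro allI impI)
        fix u v :: real assume uv: "0 \<le> u" "0 \<le> v"
        show "f (u+v) \<le> f u + f v"
        proof (cases "u = 0 \<or> v = 0")
          case True
          then show ?thesis
          proof
            assume "u = 0" then show ?thesis using f0 by simp
          next
            assume "v = 0" then show ?thesis using f0 by simp
          qed
        next
          case False
          then have "u > 0" "v > 0" using uv by auto
          from key[OF this] show ?thesis by blast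
        qed
      qed
      show "f \<in> SI" using fF am inc sub unfolding SI_def by simp
    qed
  qed
  with XMS show ?thesis by blast
qed

end
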